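(* Fix $n\ge1$. For $r\ge1$ and $0\le k\le n$, \[ \dim\mathcal{J}_r\Lambda^k(\mathbb{R}^n)=\sum_{i=0}^k(-1)^i(A_i-B_i), \] where \[ A_i:=\sum_{d=k-i}^{\min\{n,\lfloor (r+i)/2\rfloor+k-i\}}2^{n-d}\binom{n}{d}\binom{r-d+2k-i}{d}\binom{d}{k-i},\qquad B_i:=\sum_{j=0}^{r+i}\binom{n+j-1}{j}\binom{n}{k-i}. \]
   Context: Fix $n\ge1$. For a multi-index $\alpha\in\mathbb{N}^n$ and a subset $\sigma=\{\sigma(1)<\dots<\sigma(k)\}\subset\{1,\dots,n\}$, the form monomial is $x^\alpha dx_\sigma:=x_1^{\alpha_1}\cdots x_n^{\alpha_n}\,dx_{\sigma(1)}\wedge\cdots\wedge dx_{\sigma(k)}$, of degree $|\alpha|$. $\mathcal{H}_r\Lambda^k(\mathbb{R}^n)$ is the span of form monomials with $|\alpha|=r$, $|\sigma|=k$. The Koszul operator $\kappa$ is defined on monomials by $\kappa(x^\alpha dx_\sigma)=\sum_{i=1}^k(-1)^{i+1}x^\alpha x_{\sigma(i)}\,dx_{\sigma(1)}\wedge\cdots\wedge\widehat{dx_{\sigma(i)}}\wedge\cdots\wedge dx_{\sigma(k)}$ and extended linearly. The linear degree is $\mathrm{ldeg}(x^\alpha dx_\sigma):=\#\{i\notin\sigma:\alpha_i=1\}$, and $\mathcal{H}_{r,l}\Lambda^k$ is the span of form monomials in $\mathcal{H}_r\Lambda^k$ with linear degree $\ge l$. Define $\mathcal{J}_r\Lambda^k(\mathbb{R}^n):=\sum_{l\ge1}\kappa\,\mathcal{H}_{r+l-1,l}\Lambda^{k+1}(\mathbb{R}^n)$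 ($=0$ for $k=n$). Dimensions are over $\mathbb{R}$. *)

theory Defs
  imports "HOL-Analysis.Analysis" "HOL-Library.Function_Algebras"
begin

text \<open>Polynomial differential forms on R^n are represented by their coefficient
functions on form monomials x^alpha dx_sigma, where alpha is a list of length n
(exponents of x_1..x_n, indices 0..n-1) and sigma is a subset of {0..<n}.\<close>

type_synonym form = "(nat list \<times> nat set) \<Rightarrow> real"

definition fscale :: "real \<Rightarrow> form \<Rightarrow> form" where
  "fscale c f = (\<lambda>p. c * f p)"

definition fmon :: "nat list \<Rightarrow> nat set \<Rightarrow> form" where
  "fmon a s = (\<lambda>p. if p = (a, s) then 1 else 0)"

definition mon_idx :: "nat \<Rightarrow> nat \<Rightarrow> nat \<Rightarrow> (nat list \<times> nat set) set" where
  "mon_idx n r k = {(a, s). length a = n \<and> sum_list a = r \<and> s \<subseteq> {..<n} \<and> card s = k}"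

definition ldeg :: "nat \<Rightarrow> nat list \<Rightarrow> nat set \<Rightarrow> nat" where
  "ldeg n a s = card {i. i < n \<and> i \<notin> s \<and> a ! i = 1}"

definition Hrl :: "nat \<Rightarrow> nat \<Rightarrow> nat \<Rightarrow> nat \<Rightarrow> form set" where
  "Hrl n r l k = module.span fscale
     ((\<lambda>(a, s). fmon a s) ` {(a, s) \<in> mon_idx n r k. ldeg n a s \<ge> l})"

text \<open>Koszul operator on a monomial: the i-th element (1-based) of sigma gets sign
(-1)^(i+1), i.e. (-1)^(number of elements of sigma smaller than it).\<close>
definition kappa_mon :: "nat list \<Rightarrow> nat set \<Rightarrow> form" where
  "kappa_mon a s = (\<Sum>i\<in>s. fscale ((-1) ^ card {j\<in>s. j < i})
       (fmon (a[i := a ! i + 1]) (s - {i})))"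

text \<open>Linear extension (for finitely supported forms).\<close>
definition kappa :: "form \<Rightarrow> form" where
  "kappa f = (\<Sum>p\<in>{p. f p \<noteq> 0}. fscale (f p) (kappa_mon (fst p) (snd p)))"

text \<open>J_r Lambda^k(R^n) = sum over l >= 1 of kappa H_{r+l-1,l} Lambda^{k+1}; the sum of
subspaces is the span of their union.\<close>
definition Jspace :: "nat \<Rightarrow> nat \<Rightarrow> nat \<Rightarrow> form set" where
  "Jspace n r k = module.span fscale
     (\<Union>l\<in>{1..}. kappa ` Hrl n (r + l - 1) l (k + 1))"

definition Aterm :: "nat \<Rightarrow> nat \<Rightarrow> nat \<Rightarrow> nat \<Rightarrow> nat" where
  "Aterm n r k i = (\<Sum>d = k - i..min n ((r + i) div 2 + k - i).
      2 ^ (n - d) * (n choose d) * ((r + 2 * k - i - d) choose d) * (d choose (k - i)))"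

definition Bterm :: "nat \<Rightarrow> nat \<Rightarrow> nat \<Rightarrow> nat \<Rightarrow> nat" where
  "Bterm n r k i = (\<Sum>j = 0..r + i. ((n + j - 1) choose j) * (n choose (k - i)))"

end

theory Submission
  imports Defs "HOL-Library.Function_Algebras"
begin

interpretation V: vector_space fscale
  by unfold_locales (auto simp: fscale_def fun_eq_iff algebra_simps)

definition fs :: "form \<Rightarrow> bool" where "fs f = finite {p. f p \<noteq> 0}"

lemma fs_zero[simp]: "fs 0" by (simp add: fs_def)
lemma fs_fmon[simp]: "fs (fmon a s)" by (simp add: fs_def fmon_def)
lemma fs_add: "fs f \<Longrightarrow> fs g \<Longrightarrow> fs (f + g)"
  unfolding fs_def by (rule finite_subset[of _ "{p. f p \<noteq> 0} \<union> {p. g p \<noteq> 0}"]) auto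
lemma fs_scale: "fs f \<Longrightarrow> fs (fscale c f)"
  unfolding fs_def fscale_def by (rule finite_subset[of _ "{p. f p \<noteq> 0}"]) auto
lemma fs_sum: "finite A \<Longrightarrow> (\<And>x. x \<in> A \<Longrightarrow> fs (g x)) \<Longrightarrow> fs (\<Sum>x\<in>A. g x)"
  by (induction A rule: finite_induct) (auto intro: fs_add)

abbreviation km :: "nat list \<times> nat set \<Rightarrow> form" where "km p \<equiv> kappa_mon (fst p) (snd p)"

lemma fscale_zero[simp]: "fscale 0 f = 0" by (simp add: fscale_def fun_eq_iff)

lemma kappa_expand:
  assumes "finite F" "{p. f p \<noteq> 0} \<subseteq> F"
  shows "kappa f = (\<Sum>p\<in>F. fscale (f p) (km p))"
  unfolding kappa_def
  by (rule sum.mono_neutral_left) (use assms in auto)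

lemma kappa_add: assumes "fs f" "fs g" shows "kappa (f + g) = kappa f + kappa g"
proof -
  let ?F = "{p. f p \<noteq> 0} \<union> {p. g p \<noteq> 0}"
  have fin: "finite ?F" using assms by (simp add: fs_def)
  have "kappa (f + g) = (\<Sum>p\<in>?F. fscale ((f+g) p) (km p))"
    by (rule kappa_expand[OF fin]) auto
  also have "\<dots> = (\<Sum>p\<in>?F. fscale (f p) (km p)) + (\<Sum>p\<in>?F. fscale (g p) (km p))"
    by (simp add: V.scale_left_distrib sum.distrib)
  also have "\<dots> = kappa f + kappa g"
    by (simp add: kappa_expand[OF fin])
  finally show ?thesis .
qed

lemma kappa_scale: assumes "fs f" shows "kappa (fscale c f) = fscale c (kappa f)"
proof -
  let ?F = "{p. f p \<noteq> 0}"
  have fin: "finite ?F" using assms by (simp add: fs_def)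
  have "kappa (fscale c f) = (\<Sum>p\<in>?F. fscale (fscale c f p) (km p))"
    by (rule kappa_expand[OF fin]) (auto simp: fscale_def)
  also have "\<dots> = fscale c (kappa f)"
    by (simp add: kappa_expand[OF fin] V.scale_sum_right fscale_def[of c f])
  finally show ?thesis .
qed

lemma kappa_zero[simp]: "kappa 0 = 0" by (simp add: kappa_def)

lemma kappa_sum: "finite A \<Longrightarrow> (\<And>x. x \<in> A \<Longrightarrow> fs (g x)) \<Longrightarrow> kappa (\<Sum>x\<in>A. g x) = (\<Sum>x\<in>A. kappa (g x))"
  by (induction A rule: finite_induct) (auto simp: kappa_add fs_sum)

lemma kappa_fmon[simp]: "kappa (fmon a s) = kappa_mon a s"
proof -
  have "kappa (fmon a s) = (\<Sum>p\<in>{(a,s)}. fscale (fmon a s p) (km p))"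
    by (rule kappa_expand) (auto simp: fmon_def)
  also have "\<dots> = kappa_mon a s" by (simp add: fmon_def fscale_def)
  finally show ?thesis .
qed

lemma fs_kappa_mon: "fs (kappa_mon a s)"
  unfolding kappa_mon_def
  by (cases "finite s") (auto intro!: fs_sum fs_scale)

lemma fs_span: "x \<in> V.span (range (\<lambda>(a,s). fmon a s)) \<Longrightarrow> fs x"
proof (induction rule: V.span_induct_alt)
  case base show ?case by (rule fs_zero)
next
  case (step c x y) then show ?case by (metis (mono_tags, lifting) fs_add fs_scale fs_fmon imageE case_prod_beta)
qed

lemma kappa_span:
  assumes "M \<subseteq> range (\<lambda>(a,s). fmon a s)" "x \<in> V.span M"
  shows "kappa x \<in> V.span (kappa ` M)"
proof -
  have "fs x \<and> kappa x \<in> V.span (kappa ` M)"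
  using assms(2)
  proof (induction rule: V.span_induct_alt)
    case base then show ?case by (metis fs_zero kappa_zero V.span_zero)
  next
    case (step c x y)
    have fx: "fs x" using step assms(1) by (metis (mono_tags, lifting) fs_fmon imageE case_prod_beta subsetD)
    have fy: "fs y" using step(2) by blast
    have "kappa (fscale c x + y) = fscale c (kappa x) + kappa y"
      using fx fy by (simp add: kappa_add fs_scale kappa_scale)
    then show ?case using step fx fy by (metis fs_add fs_scale V.span_add V.span_scale V.span_base imageI)
  qed
  then show ?thesis by blast
qed

definition sg :: "nat set \<Rightarrow> nat \<Rightarrow> real" where "sg s i = (-1) ^ card {j\<in>s. j < i}"
definition up :: "nat list \<Rightarrow> nat \<Rightarrow> nat list" where "up a i = a[i := a ! i + 1]"

lemma kappa_mon_alt: "kappa_mon a s = (\<Sum>i\<in>s. fscale (sg s i) (fmon (up a i) (s - {i})))"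
  by (simp add: kappa_mon_def sg_def up_def)

lemma up_comm: "i \<noteq> j \<Longrightarrow> up (up a i) j = up (up a j) i"
  unfolding up_def
  by (cases "i < length a"; cases "j < length a") (auto simp: list_update_swap nth_list_update)

lemma sg_swap_lt:
  assumes "finite s" "i \<in> s" "j \<in> s" "i < j"
  shows "sg s i * sg (s - {i}) j = - (sg s j * sg (s - {j}) i)"
proof -
  have e1: "{x\<in>s - {j}. x < i} = {x\<in>s. x < i}" using assms by auto
  have e2: "{x\<in>s - {i}. x < j} = {x\<in>s. x < j} - {i}" using assms by auto
  have c2: "card {x\<in>s. x < j} \<ge> 1" using assms
    by (metis (mono_tags, lifting) One_nat_def Suc_leI card_gt_0_iff empty_iff finite_subset mem_Collect_eq subsetI)
  have c2': "card ({x\<in>s. x < j} - {i}) = card {x\<in>s. x < j} - 1"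
    using assms by (simp add: card_Diff_singleton)
  obtain m where m: "card {x\<in>s. x < j} = Suc m" using c2 by (metis Suc_pred' less_eq_Suc_le One_nat_def)
  show ?thesis unfolding sg_def e1 e2 c2' m by (simp add: power_add[symmetric] algebra_simps)
qed

lemma sg_swap:
  assumes "finite s" "i \<in> s" "j \<in> s" "i \<noteq> j"
  shows "sg s i * sg (s - {i}) j = - (sg s j * sg (s - {j}) i)"
proof (cases "i < j")
  case True then show ?thesis using sg_swap_lt assms by blast
next
  case False then have "j < i" using assms by simp
  then show ?thesis using sg_swap_lt[of s j i] assms by simp
qed

lemma fscale_neg: "fscale (- c) f = - fscale c f" by (simp add: fscale_def fun_eq_iff)

lemma kappa_kappa_mon: "kappa (kappa_mon a s) = 0"
proof (cases "finite s")
  case False then show ?thesis by (simp add: kappa_mon_def)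
next
  case fin: True
  define G where "G i j = (if i = j then 0 else
      fscale (sg s i * sg (s - {i}) j) (fmon (up (up a i) j) (s - {i} - {j})))" for i j
  have anti: "G i j = - G j i" if "i \<in> s" "j \<in> s" for i j
  proof (cases "i = j")
    case True then show ?thesis by (simp add: G_def)
  next
    case False
    have "s - {i} - {j} = s - {j} - {i}" by auto
    then show ?thesis using False sg_swap[OF fin that False] up_comm[OF False, of a]
      by (simp add: G_def fscale_neg)
  qed
  have inner: "fscale (sg s i) (kappa_mon (up a i) (s - {i})) = (\<Sum>j\<in>s. G i j)" if "i \<in> s" for i
  proof -
    have "fscale (sg s i) (kappa_mon (up a i) (s - {i}))
        = (\<Sum>j\<in>s - {i}. fscale (sg s i) (fscale (sg (s - {i}) j) (fmon (up (up a i) j) (s - {i} - {j}))))"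
      by (subst kappa_mon_alt[of "up a i" "s - {i}"]) (rule V.scale_sum_right)
    also have "\<dots> = (\<Sum>j\<in>s - {i}. G i j)"
      proof (rule sum.cong[OF refl])
      fix j assume "j \<in> s - {i}"
      then have "i \<noteq> j" by blast
      then show "fscale (sg s i) (fscale (sg (s - {i}) j) (fmon (up (up a i) j) (s - {i} - {j}))) = G i j"
        unfolding G_def by simp
    qed
    also have "\<dots> = (\<Sum>j\<in>s. G i j)"
    proof (rule sum.mono_neutral_left[OF fin])
      show "\<forall>j\<in>s - (s - {i}). G i j = 0"
      proof
        fix j assume "j \<in> s - (s - {i})"
        then have "j = i" by blast
        then show "G i j = 0" unfolding G_def by simp
      qed
    qed blast
    finally show ?thesis .
  qed
  have "kappa (kappa_mon a s) = (\<Sum>i\<in>s. fscale (sg s i) (kappa_mon (up a i) (s - {i})))"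
    unfolding kappa_mon_alt[of a s]
    apply (subst kappa_sum[OF fin])
     apply (rule fs_scale, rule fs_fmon)
    apply (rule sum.cong[OF refl])
    apply (subst kappa_scale, rule fs_fmon)
    apply (subst kappa_fmon) ..
  also have "\<dots> = (\<Sum>i\<in>s. \<Sum>j\<in>s. G i j)"
    by (rule sum.cong[OF refl]) (rule inner)
  finally have X: "kappa (kappa_mon a s) = (\<Sum>i\<in>s. \<Sum>j\<in>s. G i j)" .
  have "(\<Sum>i\<in>s. \<Sum>j\<in>s. G i j) = (\<Sum>j\<in>s. \<Sum>i\<in>s. G i j)" by (rule sum.swap)
  also have "\<dots> = (\<Sum>j\<in>s. \<Sum>i\<in>s. - G j i)"
    by (intro sum.cong refl) (rule anti)
  also have "\<dots> = - (\<Sum>i\<in>s. \<Sum>j\<in>s. G i j)" by (simp add: sum_negf)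
  finally have "(\<Sum>i\<in>s. \<Sum>j\<in>s. G i j) = 0"
    by (simp add: fun_eq_iff)
  then show ?thesis using X by simp
qed

definition ind :: "nat set \<Rightarrow> nat \<Rightarrow> nat" where "ind s i = (if i \<in> s then 1 else 0)"
definition sub1 :: "nat list \<Rightarrow> nat set \<Rightarrow> nat list" where
  "sub1 b s = map (\<lambda>i. b ! i - ind s i) [0..<length b]"
definition add1 :: "nat list \<Rightarrow> nat set \<Rightarrow> nat list" where
  "add1 a s = map (\<lambda>i. a ! i + ind s i) [0..<length a]"
definition supp :: "nat list \<Rightarrow> nat set" where "supp b = {i. i < length b \<and> b ! i \<noteq> 0}"
definition w :: "nat \<Rightarrow> bool \<Rightarrow> nat" where "w b f = (if 2 \<le> b then b else if f then 1 else 0)"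
definition wt :: "nat list \<Rightarrow> nat set \<Rightarrow> nat" where "wt b s = (\<Sum>i<length b. w (b ! i) (i \<in> s))"

lemma length_sub1[simp]: "length (sub1 b s) = length b" by (simp add: sub1_def)
lemma length_add1[simp]: "length (add1 a s) = length a" by (simp add: add1_def)
lemma nth_sub1[simp]: "i < length b \<Longrightarrow> sub1 b s ! i = b ! i - ind s i" by (simp add: sub1_def)
lemma nth_add1[simp]: "i < length a \<Longrightarrow> add1 a s ! i = a ! i + ind s i" by (simp add: add1_def)

lemma supp_sub: "supp b \<subseteq> {..<length b}" by (auto simp: supp_def)
lemma finite_supp[simp]: "finite (supp b)" using supp_sub finite_subset by blast

lemma add1_sub1: "s \<subseteq> supp b \<Longrightarrow> add1 (sub1 b s) s = b"
  by (rule nth_equalityI) (auto simp: ind_def supp_def)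

lemma sub1_add1: "s \<subseteq> {..<length a} \<Longrightarrow> sub1 (add1 a s) s = a"
  by (rule nth_equalityI) (auto simp: ind_def)

lemma supp_add1: "s \<subseteq> {..<length a} \<Longrightarrow> s \<subseteq> supp (add1 a s)"
  by (auto simp: supp_def ind_def)

lemma sum_ind: "s \<subseteq> {..<n} \<Longrightarrow> (\<Sum>i<n. ind s i) = card s"
proof -
  assume "s \<subseteq> {..<n}"
  then have "s = {i\<in>{..<n}. i \<in> s}" by auto
  then have "card s = (\<Sum>i\<in>{i\<in>{..<n}. i \<in> s}. 1)" by simp
  also have "\<dots> = (\<Sum>i<n. ind s i)" unfolding ind_def by (rule sum.inter_filter) simp
  finally show ?thesis by simp
qed

lemma sum_list_nat_sum: "sum_list (b::nat list) = (\<Sum>i<length b. b ! i)"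
  by (simp add: sum_list_sum_nth atLeast0LessThan)

lemma sum_sub1: assumes "s \<subseteq> supp b" shows "sum_list (sub1 b s) + card s = sum_list b"
proof -
  have ss: "s \<subseteq> {..<length b}" using assms supp_sub by blast
  have "sum_list (sub1 b s) + card s = (\<Sum>i<length b. b ! i - ind s i) + (\<Sum>i<length b. ind s i)"
    by (simp add: sum_list_nat_sum sum_ind[OF ss])
  also have "\<dots> = (\<Sum>i<length b. b ! i)"
    by (subst sum.distrib[symmetric]) (rule sum.cong, use assms in \<open>auto simp: ind_def supp_def\<close>)
  finally show ?thesis by (simp add: sum_list_nat_sum)
qed

lemma up_sub1: assumes "s \<subseteq> supp b" "i \<in> s" shows "up (sub1 b s) i = sub1 b (s - {i})"
  using assms unfolding up_def
  by (intro nth_equalityI) (auto simp: nth_list_update ind_def supp_def)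

lemma kappa_mon_sub1: assumes "s \<subseteq> supp b"
  shows "kappa_mon (sub1 b s) s = (\<Sum>i\<in>s. fscale (sg s i) (fmon (sub1 b (s - {i})) (s - {i})))"
  unfolding kappa_mon_alt using assms up_sub1 by (intro sum.cong refl) auto

definition lone :: "nat list \<Rightarrow> nat set \<Rightarrow> nat" where
  "lone b s = card {i. i < length b \<and> i \<notin> s \<and> b ! i = 1}"

lemma sum_wt: assumes "s \<subseteq> supp b" shows "sum_list b = wt b s + lone b s"
proof -
  let ?L = "{i. i < length b \<and> i \<notin> s \<and> b ! i = 1}"
  have L: "?L = {i\<in>{..<length b}. i \<notin> s \<and> b ! i = 1}" by auto
  have "lone b s = (\<Sum>i<length b. if i \<notin> s \<and> b ! i = 1 then 1 else 0)"
    unfolding lone_def L by (simp add: sum.inter_filter[symmetric])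
  then have "wt b s + lone b s = (\<Sum>i<length b. w (b ! i) (i \<in> s) + (if i \<notin> s \<and> b ! i = 1 then 1 else 0))"
    by (simp add: wt_def sum.distrib)
  also have "\<dots> = (\<Sum>i<length b. b ! i)"
    by (rule sum.cong) (use assms in \<open>auto simp: w_def supp_def\<close>)
  finally show ?thesis by (simp add: sum_list_nat_sum)
qed

lemma ldeg_sub1: "ldeg (length b) (sub1 b s) s = lone b s"
  unfolding ldeg_def lone_def
  by (rule arg_cong[where f=card]) (auto simp: ind_def)

lemma wt_mono: "s \<subseteq> t \<Longrightarrow> wt b s \<le> wt b t"
  unfolding wt_def by (rule sum_mono) (auto simp: w_def)

lemma wt_insert_big: assumes "2 \<le> b ! v" shows "wt b (insert v s) = wt b (s - {v})"
  unfolding wt_def by (rule sum.cong) (use assms in \<open>auto simp: w_def\<close>)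

lemma wt_small: assumes "\<forall>i<length b. b ! i \<le> 1" "s \<subseteq> supp b" shows "wt b s = card s"
proof -
  have ss: "s \<subseteq> {..<length b}" using assms supp_sub by blast
  have "wt b s = (\<Sum>i<length b. ind s i)"
    unfolding wt_def by (rule sum.cong) (use assms in \<open>auto simp: w_def ind_def supp_def\<close>)
  then show ?thesis by (simp add: sum_ind[OF ss])
qed

lemma w_le_wt: "i < length b \<Longrightarrow> w (b ! i) f' \<le> wt b s \<or> True" by simp

lemma big_le_wt: assumes "i < length b" "2 \<le> b ! i" shows "b ! i \<le> wt b s"
proof -
  have "b ! i = w (b ! i) (i \<in> s)" using assms by (simp add: w_def)
  also have "\<dots> \<le> wt b s" unfolding wt_def
    by (rule member_le_sum) (use assms in auto)
  finally show ?thesis .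
qed

definition vv :: "nat list \<Rightarrow> nat" where
  "vv b = (if \<exists>i<length b. 2 \<le> b ! i then LEAST i. i < length b \<and> 2 \<le> b ! i
           else LEAST i. i < length b \<and> 1 \<le> b ! i)"

lemma vv_props:
  assumes "sum_list b \<ge> 1"
  shows "vv b < length b" "1 \<le> b ! vv b" "b ! vv b < 2 \<Longrightarrow> \<forall>i<length b. b ! i \<le> 1"
proof -
  have ex1: "\<exists>i<length b. 1 \<le> b ! i"
  proof (rule ccontr)
    assume "\<not> ?thesis"
    then have "\<forall>i<length b. b ! i = 0" by auto
    then have "\<forall>x\<in>set b. x = 0" by (auto simp: in_set_conv_nth)
    then have "sum_list b = 0" by (simp add: sum_list_eq_0_iff)
    then show False using assms by linarith
  qed
  have "vv b < length b \<and> 1 \<le> b ! vv b \<and> (b ! vv b < 2 \<longrightarrow> (\<forall>i<length b. b ! i \<le> 1))"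
  proof (cases "\<exists>i<length b. 2 \<le> b ! i")
    case True
    then have "vv b < length b \<and> 2 \<le> b ! vv b" unfolding vv_def
      using LeastI_ex[of "\<lambda>i. i < length b \<and> 2 \<le> b ! i"] by auto
    then show ?thesis by auto
  next
    case False
    then have "vv b < length b \<and> 1 \<le> b ! vv b" unfolding vv_def
      using LeastI_ex[of "\<lambda>i. i < length b \<and> 1 \<le> b ! i"] ex1 by auto
    then show ?thesis using False by auto
  qed
  then show "vv b < length b" "1 \<le> b ! vv b" "b ! vv b < 2 \<Longrightarrow> \<forall>i<length b. b ! i \<le> 1" by auto
qed

lemma vv_supp: "sum_list b \<ge> 1 \<Longrightarrow> vv b \<in> supp b"
  using vv_props[of b] by (auto simp: supp_def)


definition Gen :: "nat \<Rightarrow> nat \<Rightarrow> nat \<Rightarrow> (nat list \<times> nat set) set" where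
  "Gen n r k = {(b,s). length b = n \<and> s \<subseteq> supp b \<and> card s = Suc k \<and> r + k + 1 \<le> sum_list b \<and> wt b s \<le> r + k}"
definition Iset :: "nat \<Rightarrow> nat \<Rightarrow> nat \<Rightarrow> (nat list \<times> nat set) set" where
  "Iset n r k = {(b,t). length b = n \<and> r + k + 1 \<le> sum_list b \<and> t \<subseteq> supp b - {vv b} \<and> card t = k
      \<and> wt b (insert (vv b) t) \<le> r + k}"
definition gel :: "nat list \<times> nat set \<Rightarrow> form" where "gel p = kappa_mon (sub1 (fst p) (snd p)) (snd p)"
definition bel :: "nat list \<times> nat set \<Rightarrow> form" where "bel p = gel (fst p, insert (vv (fst p)) (snd p))"

lemma sum_fun_apply: "(\<Sum>x\<in>A. (f x :: form)) p = (\<Sum>x\<in>A. f x p)"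
  by (induction A rule: infinite_finite_induct) auto

lemma sg_nz: "sg s i \<noteq> 0" by (simp add: sg_def)
lemma sg_sq: "sg s i * sg s i = 1" by (simp add: sg_def power_mult_distrib[symmetric])

lemma J_eq: "Jspace n r k = V.span (gel ` Gen n r k)"
proof -
  define X where "X l = {(a, s) \<in> mon_idx n (r + l - 1) (k + 1). l \<le> ldeg n a s}" for l
  define fm where "fm = (\<lambda>(a::nat list, s::nat set). fmon a s)"
  have H: "Hrl n (r + l - 1) l (k + 1) = V.span (fm ` X l)" for l
    unfolding Hrl_def X_def fm_def by simp
  have J: "Jspace n r k = V.span (\<Union>l\<in>{1..}. kappa ` V.span (fm ` X l))"
    unfolding Jspace_def H by (rule refl)
  have fmr: "fm ` X l \<subseteq> range (\<lambda>(a,s). fmon a s)" for l unfolding fm_def by auto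
  have kfm: "kappa ` fm ` X l = (\<lambda>(a,s). kappa_mon a s) ` X l" for l
    unfolding fm_def image_image by (rule image_cong) auto
  have G1: "(\<lambda>(a,s). kappa_mon a s) ` X l \<subseteq> gel ` Gen n r k" if "l \<ge> 1" for l
  proof
    fix g assume "g \<in> (\<lambda>(a,s). kappa_mon a s) ` X l"
    then obtain a s where as: "(a,s) \<in> X l" and g: "g = kappa_mon a s" by auto
    from as have la: "length a = n" "sum_list a = r + l - 1" "s \<subseteq> {..<n}" "card s = k + 1" "l \<le> ldeg n a s"
      by (auto simp: X_def mon_idx_def)
    define b where "b = add1 a s"
    have sb: "s \<subseteq> supp b" using supp_add1 la unfolding b_def by simp
    have ab: "sub1 b s = a" using sub1_add1 la unfolding b_def by simp
    have lb: "length b = n" using la by (simp add: b_def)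
    have sumb: "sum_list b = r + l - 1 + (k + 1)" using sum_sub1[OF sb] ab la by simp
    have "ldeg n a s = lone b s" using ldeg_sub1[of b s] ab lb by simp
    then have "wt b s + l \<le> sum_list b" using sum_wt[OF sb] la by simp
    then have "(b,s) \<in> Gen n r k" using sb lb sumb la that by (auto simp: Gen_def)
    moreover have "g = gel (b,s)" using g ab by (simp add: gel_def)
    ultimately show "g \<in> gel ` Gen n r k" by blast
  qed
  have G2: "gel ` Gen n r k \<subseteq> (\<Union>l\<in>{1..}. (\<lambda>(a,s). kappa_mon a s) ` X l)"
  proof
    fix g assume "g \<in> gel ` Gen n r k"
    then obtain b s where bs: "(b,s) \<in> Gen n r k" and g: "g = gel (b,s)" by auto
    from bs have lb: "length b = n" "s \<subseteq> supp b" "card s = Suc k" "r + k + 1 \<le> sum_list b" "wt b s \<le> r + k"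
      by (auto simp: Gen_def)
    define l where "l = sum_list b - r - k"
    have l1: "l \<ge> 1" using lb by (simp add: l_def)
    have sa: "sum_list (sub1 b s) = r + l - 1" using sum_sub1[OF lb(2)] lb by (simp add: l_def)
    have "ldeg n (sub1 b s) s = lone b s" using ldeg_sub1[of b s] lb by simp
    then have "l \<le> ldeg n (sub1 b s) s" using sum_wt[OF lb(2)] lb by (simp add: l_def)
    then have "(sub1 b s, s) \<in> X l" using lb sa supp_sub[of b]
      by (auto simp: X_def mon_idx_def)
    then show "g \<in> (\<Union>l\<in>{1..}. (\<lambda>(a,s). kappa_mon a s) ` X l)" using l1 g
      by (force simp: gel_def)
  qed
  show ?thesis
  proof
    show "Jspace n r k \<subseteq> V.span (gel ` Gen n r k)"
      unfolding J
    proof (rule V.span_minimal[OF _ V.subspace_span])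
      show "(\<Union>l\<in>{1..}. kappa ` V.span (fm ` X l)) \<subseteq> V.span (gel ` Gen n r k)"
      proof (intro UN_least subsetI)
        fix l x assume l: "l \<in> {1..}" and x: "x \<in> kappa ` V.span (fm ` X l)"
        then obtain y where y: "y \<in> V.span (fm ` X l)" "x = kappa y" by auto
        have l1: "1 \<le> l" using l by simp
        have "x \<in> V.span (kappa ` fm ` X l)" unfolding y(2) by (rule kappa_span[OF fmr y(1)])
        also have "\<dots> \<subseteq> V.span (gel ` Gen n r k)" unfolding kfm
          by (rule V.span_mono[OF G1[OF l1]])
        finally show "x \<in> V.span (gel ` Gen n r k)" .
      qed
    qed
    show "V.span (gel ` Gen n r k) \<subseteq> Jspace n r k"
      unfolding J
    proof (rule V.span_mono)
      show "gel ` Gen n r k \<subseteq> (\<Union>l\<in>{1..}. kappa ` V.span (fm ` X l))"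
      proof
        fix g assume "g \<in> gel ` Gen n r k"
        then have "g \<in> (\<Union>l\<in>{1..}. (\<lambda>(a,s). kappa_mon a s) ` X l)" using G2 by (rule subsetD[rotated])
        then obtain l where l: "l \<in> {1..}" and gl: "g \<in> (\<lambda>(a,s). kappa_mon a s) ` X l" by (rule UN_E)
        from gl obtain p where p: "p \<in> X l" "g = (\<lambda>(a,s). kappa_mon a s) p" by (rule imageE)
        obtain a s where ps: "p = (a,s)" by (cases p)
        have as: "(a,s) \<in> X l" and g: "g = kappa_mon a s" using p ps by simp_all
        have "fmon a s \<in> fm ` X l" unfolding fm_def using as by (rule rev_image_eqI) simp
        then have "fmon a s \<in> V.span (fm ` X l)" by (rule V.span_base)
        then have "kappa (fmon a s) \<in> kappa ` V.span (fm ` X l)" by (rule imageI)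
        then show "g \<in> (\<Union>l\<in>{1..}. kappa ` V.span (fm ` X l))" using l g
          by (simp only: kappa_fmon) blast
      qed
    qed
  qed
qed


lemma Iset_D: assumes "(b,t) \<in> Iset n r k"
  shows "length b = n" "r + k + 1 \<le> sum_list b" "t \<subseteq> supp b - {vv b}" "card t = k"
    "wt b (insert (vv b) t) \<le> r + k" "vv b \<in> supp b" "finite t" "vv b \<notin> t"
proof -
  show 1: "length b = n" "r + k + 1 \<le> sum_list b" "t \<subseteq> supp b - {vv b}" "card t = k"
    "wt b (insert (vv b) t) \<le> r + k" using assms by (auto simp: Iset_def)
  show "vv b \<in> supp b" using 1(2) by (intro vv_supp) simp
  show "finite t" using 1(3) finite_subset[OF _ finite_supp] by blast
  show "vv b \<notin> t" using 1(3) by blast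
qed

lemma Gen_D: assumes "(b,s) \<in> Gen n r k"
  shows "length b = n" "s \<subseteq> supp b" "card s = Suc k" "r + k + 1 \<le> sum_list b" "wt b s \<le> r + k"
    "vv b \<in> supp b" "finite s"
proof -
  show 1: "length b = n" "s \<subseteq> supp b" "card s = Suc k" "r + k + 1 \<le> sum_list b" "wt b s \<le> r + k"
    using assms by (auto simp: Gen_def)
  show "vv b \<in> supp b" using 1(4) by (intro vv_supp) simp
  show "finite s" using 1(2) finite_subset[OF _ finite_supp] by blast
qed

lemma bel_gen: assumes "(b,t) \<in> Iset n r k" shows "(b, insert (vv b) t) \<in> Gen n r k"
proof -
  note I = Iset_D[OF assms]
  have "card (insert (vv b) t) = Suc k" using I by simp
  moreover have "insert (vv b) t \<subseteq> supp b" using I by blast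
  ultimately show ?thesis using I unfolding Gen_def by simp
qed

lemma bel_in: "x \<in> Iset n r k \<Longrightarrow> bel x \<in> gel ` Gen n r k"
  using bel_gen[of "fst x" "snd x"] by (simp add: bel_def)

lemma gel_split:
  assumes sub: "insert v s \<subseteq> supp b" and vs: "v \<notin> s" and fin: "finite s"
  shows "fscale (sg (insert v s) v) (gel (b, s)) +
         (\<Sum>i\<in>s. fscale (sg (insert v s) i) (gel (b, insert v (s - {i})))) = 0"
proof -
  let ?s' = "insert v s"
  have E: "gel (b, ?s') = (\<Sum>i\<in>?s'. fscale (sg ?s' i) (fmon (sub1 b (?s' - {i})) (?s' - {i})))"
    unfolding gel_def using kappa_mon_sub1[OF sub] by simp
  have "0 = kappa (gel (b,?s'))" by (simp add: gel_def kappa_kappa_mon)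
  also have "\<dots> = (\<Sum>i\<in>?s'. kappa (fscale (sg ?s' i) (fmon (sub1 b (?s' - {i})) (?s' - {i}))))"
    unfolding E using fin by (intro kappa_sum) (auto intro: fs_scale)
  also have "\<dots> = (\<Sum>i\<in>?s'. fscale (sg ?s' i) (gel (b, ?s' - {i})))"
    by (intro sum.cong refl) (simp add: kappa_scale gel_def)
  also have "\<dots> = fscale (sg ?s' v) (gel (b, ?s' - {v})) + (\<Sum>i\<in>s. fscale (sg ?s' i) (gel (b, ?s' - {i})))"
    using fin vs by (rule sum.insert)
  also have "?s' - {v} = s" using vs by blast
  also have "(\<Sum>i\<in>s. fscale (sg ?s' i) (gel (b, ?s' - {i}))) = (\<Sum>i\<in>s. fscale (sg ?s' i) (gel (b, insert v (s - {i}))))"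
  proof (intro sum.cong refl)
    fix i assume "i \<in> s"
    then have "?s' - {i} = insert v (s - {i})" using vs by blast
    then show "fscale (sg ?s' i) (gel (b, ?s' - {i})) = fscale (sg ?s' i) (gel (b, insert v (s - {i})))" by simp
  qed
  finally show ?thesis by (rule sym)
qed

lemma scale_solve: assumes "fscale c x + y = 0" "c * c = 1" shows "x = fscale c (- y)"
proof -
  have "y = - fscale c x" using minus_unique[OF assms(1)] by simp
  then have "fscale c (- y) = fscale (c * c) x" by (simp add: fscale_def fun_eq_iff)
  then show ?thesis using assms(2) by (simp add: fscale_def fun_eq_iff)
qed

lemma gen_span: assumes r1: "1 \<le> r" and G: "(b,s) \<in> Gen n r k"
  shows "gel (b,s) \<in> V.span (bel ` Iset n r k)"
proof -
  note g = Gen_D[OF G]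
  let ?v = "vv b"
  show ?thesis
  proof (cases "?v \<in> s")
    case True
    let ?t = "s - {?v}"
    have ins: "insert ?v ?t = s" using True by blast
    have "card ?t = k" using g True by simp
    then have "(b, ?t) \<in> Iset n r k" using g ins unfolding Iset_def by auto
    moreover have "gel (b,s) = bel (b,?t)" using ins by (simp add: bel_def)
    ultimately show ?thesis by (intro V.span_base) (rule image_eqI)
  next
    case False
    have sub: "insert ?v s \<subseteq> supp b" using g by blast
    have Iin: "(b, s - {i}) \<in> Iset n r k" if i: "i \<in> s" for i
    proof -
      have c: "card (s - {i}) = k" using g i by simp
      have sub2: "s - {i} \<subseteq> supp b - {?v}" using g False by blast
      have "wt b (insert ?v (s - {i})) \<le> r + k"
      proof (cases "2 \<le> b ! ?v")
        case True
        then have "wt b (insert ?v (s - {i})) = wt b (s - {i} - {?v})" by (rule wt_insert_big)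
        also have "\<dots> \<le> wt b s" by (rule wt_mono) blast
        finally show ?thesis using g by simp
      next
        case False
        then have small: "\<forall>j<length b. b ! j \<le> 1" using vv_props(3)[of b] g by simp
        have "wt b (insert ?v (s - {i})) = card (insert ?v (s - {i}))"
          using sub by (intro wt_small[OF small]) blast
        also have "\<dots> = Suc k" using c g \<open>?v \<notin> s\<close> by simp
        finally show ?thesis using r1 by simp
      qed
      then show ?thesis using g c sub2 unfolding Iset_def by simp
    qed
    have eq: "fscale (sg (insert ?v s) ?v) (gel (b, s)) +
         (\<Sum>i\<in>s. fscale (sg (insert ?v s) i) (gel (b, insert ?v (s - {i})))) = 0"
      by (rule gel_split[OF sub False g(7)])
    have "gel (b,s) = fscale (sg (insert ?v s) ?v) (- (\<Sum>i\<in>s. fscale (sg (insert ?v s) i) (gel (b, insert ?v (s - {i})))))"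
      by (rule scale_solve[OF eq sg_sq])
    also have "\<dots> \<in> V.span (bel ` Iset n r k)"
    proof (intro V.span_scale V.span_neg V.span_sum)
      fix i assume i: "i \<in> s"
      have "gel (b, insert ?v (s - {i})) = bel (b, s - {i})" by (simp add: bel_def)
      also have "\<dots> \<in> V.span (bel ` Iset n r k)" using Iin[OF i] by (intro V.span_base imageI)
      finally show "gel (b, insert ?v (s - {i})) \<in> V.span (bel ` Iset n r k)" .
    qed
    finally show ?thesis .
  qed
qed


definition pt :: "nat list \<times> nat set \<Rightarrow> nat list \<times> nat set" where
  "pt x = (sub1 (fst x) (snd x), snd x)"

lemma match_iff:
  assumes x: "(b,t) \<in> Iset n r k" and y: "(b',t') \<in> Iset n r k" and i: "i \<in> insert (vv b') t'"
  shows "((sub1 b t, t) = (sub1 b' (insert (vv b') t' - {i}), insert (vv b') t' - {i}))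
         \<longleftrightarrow> ((b,t) = (b',t') \<and> i = vv b')"
proof
  note X = Iset_D[OF x] and Y = Iset_D[OF y]
  assume eq: "(sub1 b t, t) = (sub1 b' (insert (vv b') t' - {i}), insert (vv b') t' - {i})"
  then have tt: "t = insert (vv b') t' - {i}" by simp
  then have s1: "sub1 b t = sub1 b' t" using eq by simp
  have "t \<subseteq> supp b" using X by blast
  moreover have "t \<subseteq> supp b'" using tt Y by blast
  ultimately have bb: "b = b'" using add1_sub1 s1 by metis
  have iv: "i = vv b'"
  proof (rule ccontr)
    assume "i \<noteq> vv b'"
    then have "vv b' \<in> t" using tt by blast
    then show False using X bb by blast
  qed
  have "t = t'" using tt iv Y by blast
  then show "(b,t) = (b',t') \<and> i = vv b'" using bb iv by simp
next
  note X = Iset_D[OF x] and Y = Iset_D[OF y]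
  assume h: "(b,t) = (b',t') \<and> i = vv b'"
  have "insert (vv b') t' - {vv b'} = t'" using Y(8) by blast
  then show "(sub1 b t, t) = (sub1 b' (insert (vv b') t' - {i}), insert (vv b') t' - {i})"
    using h by simp
qed

lemma bel_eval:
  assumes x: "x \<in> Iset n r k" and y: "y \<in> Iset n r k"
  shows "bel y (pt x) = (if x = y then sg (insert (vv (fst y)) (snd y)) (vv (fst y)) else 0)"
proof -
  obtain b t where xb: "x = (b,t)" by (cases x)
  obtain b' t' where yb: "y = (b',t')" by (cases y)
  note X = Iset_D[OF x[unfolded xb]] and Y = Iset_D[OF y[unfolded yb]]
  let ?s = "insert (vv b') t'"
  have sub: "?s \<subseteq> supp b'" using Y by blast
  have fin: "finite ?s" using Y by simp
  have "bel y (pt x) = (\<Sum>i\<in>?s. fscale (sg ?s i) (fmon (sub1 b' (?s - {i})) (?s - {i}))) (sub1 b t, t)"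
    unfolding yb xb bel_def gel_def pt_def using kappa_mon_sub1[OF sub] by simp
  also have "\<dots> = (\<Sum>i\<in>?s. sg ?s i * (if (sub1 b t, t) = (sub1 b' (?s - {i}), ?s - {i}) then 1 else 0))"
    unfolding sum_fun_apply by (simp add: fscale_def fmon_def)
  also have "\<dots> = (\<Sum>i\<in>?s. if i = vv b' then (if (b,t) = (b',t') then sg ?s i else 0) else 0)"
  proof (intro sum.cong refl)
    fix i assume i: "i \<in> ?s"
    show "sg ?s i * (if (sub1 b t, t) = (sub1 b' (?s - {i}), ?s - {i}) then 1 else 0) =
          (if i = vv b' then (if (b,t) = (b',t') then sg ?s i else 0) else 0)"
      unfolding match_iff[OF x[unfolded xb] y[unfolded yb] i]
      by (cases "(b,t) = (b',t')"; cases "i = vv b'") auto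
  qed
  also have "\<dots> = (if (b,t) = (b',t') then sg ?s (vv b') else 0)"
    using fin by (simp add: sum.delta')
  finally show ?thesis using xb yb by simp
qed

lemma bel_inj: "inj_on bel (Iset n r k)"
proof
  fix x y assume x: "x \<in> Iset n r k" and y: "y \<in> Iset n r k" and e: "bel x = bel y"
  have h: "bel y (pt x) = bel x (pt x)" using e by simp
  show "x = y"
  proof (rule ccontr)
    assume ne: "x \<noteq> y"
    have "bel y (pt x) = 0" using bel_eval[OF x y] ne by simp
    moreover have "bel x (pt x) \<noteq> 0" using bel_eval[OF x x] sg_nz by simp
    ultimately show False using h by simp
  qed
qed

lemma Iset_finite: "finite (Iset n r k)"
proof -
  let ?M = "r + k + 1"
  have "Iset n r k \<subseteq> {b. set b \<subseteq> {..?M} \<and> length b = n} \<times> Pow {..<n}"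
  proof
    fix x assume x: "x \<in> Iset n r k"
    obtain b t where xb: "x = (b,t)" by (cases x)
    note X = Iset_D[OF x[unfolded xb]]
    have "set b \<subseteq> {..?M}"
    proof
      fix e assume "e \<in> set b"
      then obtain i where i: "i < length b" "b ! i = e" by (auto simp: in_set_conv_nth)
      show "e \<in> {..?M}"
      proof (cases "2 \<le> e")
        case True
        then have "e \<le> wt b (insert (vv b) t)" using big_le_wt[of i b] i by simp
        then show ?thesis using X by simp
      qed simp
    qed
    moreover have "t \<subseteq> {..<n}" using X supp_sub[of b] by blast
    ultimately show "x \<in> {b. set b \<subseteq> {..?M} \<and> length b = n} \<times> Pow {..<n}" using xb X by simp
  qed
  moreover have "finite ({b. set b \<subseteq> {..?M} \<and> length b = n} \<times> Pow {..<n})"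
    by (intro finite_cartesian_product finite_lists_length_eq) auto
  ultimately show ?thesis by (rule finite_subset)
qed

lemma bel_indep: "V.independent (bel ` Iset n r k)"
proof (rule V.independent_if_scalars_zero)
  show fin: "finite (bel ` Iset n r k)" using Iset_finite by simp
  fix c u assume s0: "(\<Sum>v\<in>bel ` Iset n r k. fscale (c v) v) = 0" and u: "u \<in> bel ` Iset n r k"
  then obtain x where x: "x \<in> Iset n r k" and ux: "u = bel x" by auto
  have "0 = (\<Sum>v\<in>bel ` Iset n r k. fscale (c v) v) (pt x)" using s0 by simp
  also have "\<dots> = (\<Sum>y\<in>Iset n r k. c (bel y) * bel y (pt x))"
    unfolding sum_fun_apply by (simp add: sum.reindex[OF bel_inj] fscale_def)
  also have "\<dots> = (\<Sum>y\<in>Iset n r k. if y = x then c (bel x) * sg (insert (vv (fst x)) (snd x)) (vv (fst x)) else 0)"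
  proof (intro sum.cong refl)
    fix y assume y: "y \<in> Iset n r k"
    show "c (bel y) * bel y (pt x) = (if y = x then c (bel x) * sg (insert (vv (fst x)) (snd x)) (vv (fst x)) else 0)"
      using bel_eval[OF x y] by auto
  qed
  also have "\<dots> = c (bel x) * sg (insert (vv (fst x)) (snd x)) (vv (fst x))"
    using x Iset_finite by (simp add: sum.delta)
  finally show "c u = 0" using sg_nz ux by simp
qed

lemma dimJ: assumes "1 \<le> r" shows "vector_space.dim fscale (Jspace n r k) = card (Iset n r k)"
proof -
  have "V.span (gel ` Gen n r k) = V.span (bel ` Iset n r k)"
  proof (rule V.span_eq[THEN iffD2], rule conjI)
    show "gel ` Gen n r k \<subseteq> V.span (bel ` Iset n r k)"
      using gen_span[OF assms] by auto
    show "bel ` Iset n r k \<subseteq> V.span (gel ` Gen n r k)"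
      using bel_in V.span_base by blast
  qed
  then have "V.dim (Jspace n r k) = V.dim (V.span (bel ` Iset n r k))" by (simp add: J_eq)
  also have "\<dots> = card (bel ` Iset n r k)" by (rule V.dim_span_eq_card_independent[OF bel_indep])
  also have "\<dots> = card (Iset n r k)" by (rule card_image[OF bel_inj])
  finally show ?thesis .
qed


definition Eset :: "nat \<Rightarrow> nat \<Rightarrow> nat \<Rightarrow> (nat list \<times> nat set) set" where
  "Eset n r k = {(b,s). length b = n \<and> r + k + 1 \<le> sum_list b \<and> s \<subseteq> supp b \<and> card s = k \<and> wt b s \<le> r + k}"

lemma wt_insert_vv:
  assumes "1 \<le> sum_list b" "s \<subseteq> supp b" "vv b \<notin> s" "1 \<le> r"
  shows "wt b (insert (vv b) s) \<le> r + card s \<longleftrightarrow> wt b s \<le> r + card s"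
proof (cases "2 \<le> b ! vv b")
  case True
  then have "wt b (insert (vv b) s) = wt b (s - {vv b})" by (rule wt_insert_big)
  also have "s - {vv b} = s" using assms by blast
  finally show ?thesis by simp
next
  case False
  then have small: "\<forall>j<length b. b ! j \<le> 1" using vv_props(3)[OF assms(1)] by simp
  have fin: "finite s" using finite_subset[OF assms(2) finite_supp] .
  have "wt b (insert (vv b) s) = card (insert (vv b) s)"
    using vv_supp[OF assms(1)] assms(2) by (intro wt_small[OF small]) (rule insert_subsetI)
  also have "\<dots> = Suc (card s)" using fin assms(3) by simp
  finally have 1: "wt b (insert (vv b) s) = Suc (card s)" .
  have 2: "wt b s = card s" using wt_small[OF small assms(2)] .
  show ?thesis using 1 2 assms(4) by simp
qed

lemma E1: assumes "1 \<le> r" shows "{p \<in> Eset n r k. vv (fst p) \<notin> snd p} = Iset n r k"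
proof (intro set_eqI iffI)
  fix p assume p: "p \<in> {p \<in> Eset n r k. vv (fst p) \<notin> snd p}"
  obtain b s where ps: "p = (b,s)" by (cases p)
  have h: "length b = n" "r + k + 1 \<le> sum_list b" "s \<subseteq> supp b" "card s = k" "wt b s \<le> r + k" "vv b \<notin> s"
    using p ps by (auto simp: Eset_def)
  have "wt b (insert (vv b) s) \<le> r + k" using wt_insert_vv[of b s r] h assms by simp
  then show "p \<in> Iset n r k" using h ps by (auto simp: Iset_def)
next
  fix p assume p: "p \<in> Iset n r k"
  obtain b s where ps: "p = (b,s)" by (cases p)
  note I = Iset_D[OF p[unfolded ps]]
  have ssub: "s \<subseteq> supp b" using I by blast
  have "wt b s \<le> r + k" using wt_insert_vv[of b s r] I assms ssub by simp
  then show "p \<in> {p \<in> Eset n r k. vv (fst p) \<notin> snd p}" using I ps by (auto simp: Eset_def)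
qed

lemma E2: "{p \<in> Eset n r (Suc k). vv (fst p) \<in> snd p} =
   (\<lambda>p. (fst p, insert (vv (fst p)) (snd p))) ` Iset n (Suc r) k"
proof (intro set_eqI iffI)
  fix p assume p: "p \<in> {p \<in> Eset n r (Suc k). vv (fst p) \<in> snd p}"
  obtain b s where ps: "p = (b,s)" by (cases p)
  have h: "length b = n" "r + Suc k + 1 \<le> sum_list b" "s \<subseteq> supp b" "card s = Suc k" "wt b s \<le> r + Suc k" "vv b \<in> s"
    using p ps by (auto simp: Eset_def)
  let ?t = "s - {vv b}"
  have ins: "insert (vv b) ?t = s" using h by blast
  have "card ?t = k" using h by simp
  then have "(b, ?t) \<in> Iset n (Suc r) k" using h ins by (auto simp: Iset_def)
  moreover have "p = (\<lambda>p. (fst p, insert (vv (fst p)) (snd p))) (b, ?t)" using ps ins by simp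
  ultimately show "p \<in> (\<lambda>p. (fst p, insert (vv (fst p)) (snd p))) ` Iset n (Suc r) k" by blast
next
  fix p assume "p \<in> (\<lambda>p. (fst p, insert (vv (fst p)) (snd p))) ` Iset n (Suc r) k"
  then obtain b t where bt: "(b,t) \<in> Iset n (Suc r) k" and p: "p = (b, insert (vv b) t)" by auto
  note I = Iset_D[OF bt]
  have "card (insert (vv b) t) = Suc k" using I by simp
  then show "p \<in> {p \<in> Eset n r (Suc k). vv (fst p) \<in> snd p}" using I p by (auto simp: Eset_def)
qed

lemma E0: "{p \<in> Eset n r 0. vv (fst p) \<in> snd p} = {}"
proof -
  have "s = {}" if "(b,s) \<in> Eset n r 0" for b s
  proof -
    have "s \<subseteq> supp b" "card s = 0" using that by (auto simp: Eset_def)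
    then show ?thesis using finite_subset[OF _ finite_supp] by fastforce
  qed
  then show ?thesis by fastforce
qed

lemma Eset_finite: "finite (Eset n r k)"
proof -
  let ?M = "r + k + 1"
  have "Eset n r k \<subseteq> {b. set b \<subseteq> {..?M} \<and> length b = n} \<times> Pow {..<n}"
  proof
    fix x assume x: "x \<in> Eset n r k"
    obtain b t where xb: "x = (b,t)" by (cases x)
    have X: "length b = n" "t \<subseteq> supp b" "wt b t \<le> r + k" using x xb by (auto simp: Eset_def)
    have "set b \<subseteq> {..?M}"
    proof
      fix e assume "e \<in> set b"
      then obtain i where i: "i < length b" "b ! i = e" by (auto simp: in_set_conv_nth)
      show "e \<in> {..?M}"
      proof (cases "2 \<le> e")
        case True
        then have "e \<le> wt b t" using big_le_wt[of i b] i by simp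
        then show ?thesis using X by simp
      qed simp
    qed
    moreover have "t \<subseteq> {..<n}" using X supp_sub[of b] by blast
    ultimately show "x \<in> {b. set b \<subseteq> {..?M} \<and> length b = n} \<times> Pow {..<n}" using xb X by simp
  qed
  moreover have "finite ({b. set b \<subseteq> {..?M} \<and> length b = n} \<times> Pow {..<n})"
    by (intro finite_cartesian_product finite_lists_length_eq) auto
  ultimately show ?thesis by (rule finite_subset)
qed

lemma card_E:
  assumes "1 \<le> r"
  shows "card (Eset n r k) = card (Iset n r k) + (case k of 0 \<Rightarrow> 0 | Suc k' \<Rightarrow> card (Iset n (Suc r) k'))"
proof -
  let ?A = "{p \<in> Eset n r k. vv (fst p) \<notin> snd p}" and ?B = "{p \<in> Eset n r k. vv (fst p) \<in> snd p}"
  have "Eset n r k = ?A \<union> ?B" by blast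
  moreover have "card (?A \<union> ?B) = card ?A + card ?B"
    by (rule card_Un_disjoint) (use Eset_finite[of n r k] in auto)
  ultimately have "card (Eset n r k) = card ?A + card ?B" by simp
  also have "card ?A = card (Iset n r k)" using E1[OF assms] by simp
  also have "card ?B = (case k of 0 \<Rightarrow> 0 | Suc k' \<Rightarrow> card (Iset n (Suc r) k'))"
  proof (cases k)
    case 0
    have "?B = {}" unfolding 0 by (rule E0)
    then have "card ?B = 0" by (simp only: card.empty)
    then show ?thesis using 0 by (simp only: nat.case)
  next
    case (Suc k')
    have inj: "inj_on (\<lambda>p. (fst p, insert (vv (fst p)) (snd p))) (Iset n (Suc r) k')"
    proof (rule inj_onI)
      fix x y assume x: "x \<in> Iset n (Suc r) k'" and y: "y \<in> Iset n (Suc r) k'"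
        and e: "(fst x, insert (vv (fst x)) (snd x)) = (fst y, insert (vv (fst y)) (snd y))"
      obtain b t where xb: "x = (b,t)" by (cases x)
      obtain b' t' where yb: "y = (b',t')" by (cases y)
      note X = Iset_D[OF x[unfolded xb]] and Y = Iset_D[OF y[unfolded yb]]
      have bb: "b = b'" using e xb yb by simp
      have ii: "insert (vv b) t = insert (vv b) t'" using e xb yb bb by simp
      have nt: "vv b \<notin> t'" using Y(8) bb by simp
      have "t = t'" using insert_ident[OF X(8) nt] ii by simp
      then show "x = y" using xb yb bb by simp
    qed
    show ?thesis using Suc E2[of n r k'] card_image[OF inj] by simp
  qed
  finally show ?thesis .
qed


definition Aset :: "nat \<Rightarrow> nat \<Rightarrow> nat \<Rightarrow> (nat list \<times> nat set) set" where
  "Aset n N k = {(b,s). length b = n \<and> s \<subseteq> supp b \<and> card s = k \<and> wt b s \<le> N}"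
definition Pset :: "nat \<Rightarrow> nat \<Rightarrow> nat \<Rightarrow> (nat list \<times> nat set) set" where
  "Pset n N k = {(b,s). length b = n \<and> sum_list b \<le> N \<and> s \<subseteq> supp b \<and> card s = k}"

lemma Aset_finite: "finite (Aset n N k)"
proof -
  let ?M = "N + 1"
  have "Aset n N k \<subseteq> {b. set b \<subseteq> {..?M} \<and> length b = n} \<times> Pow {..<n}"
  proof
    fix x assume x: "x \<in> Aset n N k"
    obtain b t where xb: "x = (b,t)" by (cases x)
    have X: "length b = n" "t \<subseteq> supp b" "wt b t \<le> N" using x xb by (auto simp: Aset_def)
    have "set b \<subseteq> {..?M}"
    proof
      fix e assume "e \<in> set b"
      then obtain i where i: "i < length b" "b ! i = e" by (auto simp: in_set_conv_nth)
      show "e \<in> {..?M}"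
      proof (cases "2 \<le> e")
        case True
        then have "e \<le> wt b t" using big_le_wt[of i b] i by simp
        then show ?thesis using X by simp
      qed simp
    qed
    moreover have "t \<subseteq> {..<n}" using X supp_sub[of b] by blast
    ultimately show "x \<in> {b. set b \<subseteq> {..?M} \<and> length b = n} \<times> Pow {..<n}" using xb X by simp
  qed
  moreover have "finite ({b. set b \<subseteq> {..?M} \<and> length b = n} \<times> Pow {..<n})"
    by (intro finite_cartesian_product finite_lists_length_eq) auto
  ultimately show ?thesis by (rule finite_subset)
qed

lemma P_sub_A: "Pset n N k \<subseteq> Aset n N k"
proof
  fix x assume x: "x \<in> Pset n N k"
  obtain b s where xb: "x = (b,s)" by (cases x)
  have h: "length b = n" "sum_list b \<le> N" "s \<subseteq> supp b" "card s = k" using x xb by (auto simp: Pset_def)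
  have "wt b s \<le> sum_list b" using sum_wt[OF h(3)] by simp
  then show "x \<in> Aset n N k" using h xb by (simp add: Aset_def)
qed

lemma E_eq: "Eset n r k = Aset n (r + k) k - Pset n (r + k) k"
  unfolding Eset_def Aset_def Pset_def by auto

lemma card_E_AP: "card (Eset n r k) = card (Aset n (r + k) k) - card (Pset n (r + k) k)"
  unfolding E_eq by (rule card_Diff_subset[OF finite_subset[OF P_sub_A Aset_finite] P_sub_A])

lemma finite_sumle: "finite {a::nat list. length a = n \<and> sum_list a \<le> r}"
proof -
  have "{a::nat list. length a = n \<and> sum_list a \<le> r} \<subseteq> {a. set a \<subseteq> {..r} \<and> length a = n}"
    using member_le_sum_list by fastforce
  moreover have "finite {a. set a \<subseteq> {..r::nat} \<and> length a = n}" by (intro finite_lists_length_eq) auto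
  ultimately show ?thesis by (rule finite_subset)
qed

lemma card_sumle: "card {a::nat list. length a = n \<and> sum_list a \<le> r} = (\<Sum>j=0..r. (n + j - 1) choose j)"
proof (induction r)
  case 0
  have "{a::nat list. length a = n \<and> sum_list a \<le> 0} = {a. length a = n \<and> sum_list a = 0}" by auto
  then show ?case using card_length_sum_list[of n 0] by simp
next
  case (Suc r)
  have "{a::nat list. length a = n \<and> sum_list a \<le> Suc r} =
      {a. length a = n \<and> sum_list a \<le> r} \<union> {a. length a = n \<and> sum_list a = Suc r}" by auto
  moreover have "card ({a::nat list. length a = n \<and> sum_list a \<le> r} \<union> {a. length a = n \<and> sum_list a = Suc r})
      = card {a::nat list. length a = n \<and> sum_list a \<le> r} + card {a::nat list. length a = n \<and> sum_list a = Suc r}"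
  proof (rule card_Un_disjoint)
    show "finite {a::nat list. length a = n \<and> sum_list a \<le> r}" by (rule finite_sumle)
    show "finite {a::nat list. length a = n \<and> sum_list a = Suc r}"
      by (rule finite_subset[OF _ finite_sumle[of n "Suc r"]]) auto
  qed auto
  ultimately show ?case using Suc card_length_sum_list[of n "Suc r"] by (simp add: add.commute)
qed

lemma card_P: "card (Pset n (r + k) k) = Bterm n r k 0"
proof -
  let ?X = "{a::nat list. length a = n \<and> sum_list a \<le> r} \<times> {s. s \<subseteq> {..<n} \<and> card s = k}"
  let ?f = "\<lambda>p::nat list \<times> nat set. (add1 (fst p) (snd p), snd p)"
  have inj: "inj_on ?f ?X"
  proof (rule inj_onI)
    fix x y assume x: "x \<in> ?X" and y: "y \<in> ?X" and e: "?f x = ?f y"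
    have sn: "snd x = snd y" using e by simp
    have ad: "add1 (fst x) (snd x) = add1 (fst y) (snd y)" using e by (metis fst_conv)
    have lx: "snd x \<subseteq> {..<length (fst x)}" using x by (auto simp: mem_Times_iff)
    have ly: "snd y \<subseteq> {..<length (fst y)}" using y by (auto simp: mem_Times_iff)
    have "fst x = sub1 (add1 (fst x) (snd x)) (snd x)" using sub1_add1[OF lx] by simp
    also have "\<dots> = sub1 (add1 (fst y) (snd y)) (snd y)" using ad sn by simp
    also have "\<dots> = fst y" using sub1_add1[OF ly] by simp
    finally have "fst x = fst y" .
    moreover note sn
    ultimately show "x = y" by (simp add: prod_eq_iff)
  qed
  have im: "?f ` ?X = Pset n (r + k) k"
  proof (intro set_eqI iffI)
    fix y assume "y \<in> ?f ` ?X"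
    then obtain a s where a: "length a = n" "sum_list a \<le> r" "s \<subseteq> {..<n}" "card s = k" and y: "y = (add1 a s, s)"
      by auto
    have sb: "s \<subseteq> supp (add1 a s)" using supp_add1 a by simp
    have "sum_list (add1 a s) = sum_list a + k" using sum_sub1[OF sb] sub1_add1 a by simp
    then show "y \<in> Pset n (r + k) k" using a y sb by (simp add: Pset_def)
  next
    fix y assume y: "y \<in> Pset n (r + k) k"
    obtain b s where yb: "y = (b,s)" by (cases y)
    have h: "length b = n" "sum_list b \<le> r + k" "s \<subseteq> supp b" "card s = k" using y yb by (auto simp: Pset_def)
    have "sum_list (sub1 b s) \<le> r" using sum_sub1[OF h(3)] h by simp
    moreover have "s \<subseteq> {..<n}" using h supp_sub[of b] by blast
    ultimately have "(sub1 b s, s) \<in> ?X" using h by simp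
    moreover have "y = ?f (sub1 b s, s)" using add1_sub1[OF h(3)] yb by simp
    ultimately show "y \<in> ?f ` ?X" by blast
  qed
  have "card (Pset n (r + k) k) = card ?X" using card_image[OF inj] im by simp
  also have "\<dots> = (\<Sum>j=0..r. (n + j - 1) choose j) * (n choose k)"
    using card_sumle[of n r] n_subsets[of "{..<n}" k] by (simp add: card_cartesian_product)
  also have "\<dots> = Bterm n r k 0" by (simp add: Bterm_def sum_distrib_right)
  finally show ?thesis .
qed


definition valid :: "(nat \<times> bool) list \<Rightarrow> bool" where "valid xs = (\<forall>x\<in>set xs. snd x \<longrightarrow> 1 \<le> fst x)"
definition nT :: "(nat \<times> bool) list \<Rightarrow> nat" where "nT xs = length (filter snd xs)"
definition WL :: "(nat \<times> bool) list \<Rightarrow> nat" where "WL xs = sum_list (map (\<lambda>x. w (fst x) (snd x)) xs)"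
definition AL :: "nat \<Rightarrow> nat \<Rightarrow> nat \<Rightarrow> (nat \<times> bool) list set" where
  "AL n N k = {xs. length xs = n \<and> valid xs \<and> nT xs = k \<and> WL xs \<le> N}"
definition QL :: "nat \<Rightarrow> nat \<Rightarrow> nat \<Rightarrow> (nat \<times> bool) list set" where
  "QL n M k = {xs. length xs = n \<and> valid xs \<and> nT xs = k \<and> WL xs = M}"
definition enc :: "nat list \<times> nat set \<Rightarrow> (nat \<times> bool) list" where
  "enc p = map (\<lambda>i. (fst p ! i, i \<in> snd p)) [0..<length (fst p)]"
definition dec :: "(nat \<times> bool) list \<Rightarrow> nat list \<times> nat set" where
  "dec xs = (map fst xs, {i. i < length xs \<and> snd (xs ! i)})"

lemma valid_Cons[simp]: "valid (x # xs) = ((snd x \<longrightarrow> 1 \<le> fst x) \<and> valid xs)" by (simp add: valid_def)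
lemma valid_Nil[simp]: "valid []" by (simp add: valid_def)
lemma nT_Cons[simp]: "nT (x # xs) = (if snd x then Suc (nT xs) else nT xs)" by (simp add: nT_def)
lemma nT_Nil[simp]: "nT [] = 0" by (simp add: nT_def)
lemma WL_Cons[simp]: "WL (x # xs) = w (fst x) (snd x) + WL xs" by (simp add: WL_def)
lemma WL_Nil[simp]: "WL [] = 0" by (simp add: WL_def)

lemma enc_dec: "enc (dec xs) = xs"
  by (rule nth_equalityI) (auto simp: enc_def dec_def)

lemma inj_dec: "inj_on dec A"
  by (metis enc_dec inj_on_inverseI)

lemma dec_props:
  assumes "valid xs"
  shows "snd (dec xs) \<subseteq> supp (fst (dec xs))" "card (snd (dec xs)) = nT xs"
    "wt (fst (dec xs)) (snd (dec xs)) = WL xs" "length (fst (dec xs)) = length xs"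
proof -
  show "snd (dec xs) \<subseteq> supp (fst (dec xs))"
  proof
    fix i assume "i \<in> snd (dec xs)"
    then have i: "i < length xs" "snd (xs ! i)" by (auto simp: dec_def)
    then have "1 \<le> fst (xs ! i)" using assms nth_mem[OF i(1)] by (auto simp: valid_def)
    then show "i \<in> supp (fst (dec xs))" using i by (simp add: supp_def dec_def)
  qed
  show "card (snd (dec xs)) = nT xs" by (simp add: dec_def nT_def length_filter_conv_card)
  have "wt (fst (dec xs)) (snd (dec xs)) = (\<Sum>i<length xs. w (fst (xs ! i)) (snd (xs ! i)))"
    unfolding wt_def dec_def by (intro sum.cong) auto
  also have "\<dots> = WL xs" unfolding WL_def
    by (simp add: sum_list_sum_nth atLeast0LessThan)
  finally show "wt (fst (dec xs)) (snd (dec xs)) = WL xs" .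
  show "length (fst (dec xs)) = length xs" by (simp add: dec_def)
qed

lemma dec_enc: assumes "snd p \<subseteq> {..<length (fst p)}" shows "dec (enc p) = p"
proof -
  have 1: "map fst (enc p) = fst p" by (rule nth_equalityI) (auto simp: enc_def)
  have 2: "{i. i < length (enc p) \<and> snd (enc p ! i)} = snd p" using assms by (auto simp: enc_def)
  show ?thesis using 1 2 by (simp add: dec_def prod_eq_iff)
qed

lemma valid_enc: assumes "snd p \<subseteq> supp (fst p)" shows "valid (enc p)"
  using assms by (auto simp: valid_def enc_def supp_def)

lemma Aset_dec: "Aset n N k = dec ` AL n N k"
proof (intro set_eqI iffI)
  fix p assume p: "p \<in> Aset n N k"
  obtain b s where pb: "p = (b,s)" by (cases p)
  have h: "length b = n" "s \<subseteq> supp b" "card s = k" "wt b s \<le> N" using p pb by (auto simp: Aset_def)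
  have ss: "snd p \<subseteq> {..<length (fst p)}" using h pb supp_sub[of b] by auto
  have de: "dec (enc p) = p" by (rule dec_enc[OF ss])
  have v: "valid (enc p)" using h pb by (intro valid_enc) simp
  note D = dec_props[OF v, unfolded de]
  have "length (enc p) = n" using h pb by (simp add: enc_def)
  then have "enc p \<in> AL n N k" using D h pb v by (simp add: AL_def)
  then show "p \<in> dec ` AL n N k" using de by (metis imageI)
next
  fix p assume "p \<in> dec ` AL n N k"
  then obtain xs where xs: "xs \<in> AL n N k" and p: "p = dec xs" by blast
  have h: "length xs = n" "valid xs" "nT xs = k" "WL xs \<le> N" using xs by (auto simp: AL_def)
  note D = dec_props[OF h(2)]
  show "p \<in> Aset n N k" unfolding p Aset_def using D h by (simp add: case_prod_beta)
qed

lemma card_Aset_AL: "card (Aset n N k) = card (AL n N k)"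
  unfolding Aset_dec by (rule card_image[OF inj_dec])

lemma AL_finite: "finite (AL n N k)"
  using Aset_finite[of n N k] unfolding Aset_dec by (rule finite_imageD[OF _ inj_dec])

lemma QL_sub: "QL n M k \<subseteq> AL n M k" by (auto simp: QL_def AL_def)
lemma QL_finite: "finite (QL n M k)" using finite_subset[OF QL_sub AL_finite] .


definition B1set :: "nat \<Rightarrow> nat \<Rightarrow> nat \<Rightarrow> (nat \<times> bool) list set" where
  "B1set n M k = {ys \<in> AL n (M - 1) (k - 1). 1 \<le> M \<and> 1 \<le> k}"
definition B2set :: "nat \<Rightarrow> nat \<Rightarrow> nat \<Rightarrow> (nat \<times> bool) list set" where
  "B2set n M k = {ys \<in> AL n (M - 2) k. 2 \<le> M}"
definition h1 :: "nat \<Rightarrow> (nat \<times> bool) list \<Rightarrow> (nat \<times> bool) list" where "h1 M ys = (M - WL ys, True) # ys"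
definition h2 :: "nat \<Rightarrow> (nat \<times> bool) list \<Rightarrow> (nat \<times> bool) list" where "h2 M ys = (M - WL ys, False) # ys"

lemma QL_Suc_eq:
  "QL (Suc n) M k = (Cons (0,False) ` QL n M k \<union> Cons (1,False) ` QL n M k) \<union> h1 M ` B1set n M k \<union> h2 M ` B2set n M k"
  (is "?L = ?R")
proof (intro set_eqI iffI)
  fix xs assume xs: "xs \<in> ?L"
  then have len: "length xs = Suc n" by (simp add: QL_def)
  then obtain x ys where xy: "xs = x # ys" by (cases xs) auto
  obtain a f where x: "x = (a,f)" by (cases x)
  have h: "length ys = n" "f \<longrightarrow> 1 \<le> a" "valid ys" "(if f then Suc (nT ys) else nT ys) = k" "w a f + WL ys = M"
    using xs xy x by (auto simp: QL_def)
  show "xs \<in> ?R"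
  proof (cases f)
    case True
    have wa: "w a f = a" using True h(2) by (simp add: w_def)
    have "ys \<in> B1set n M k" using h True wa by (auto simp: B1set_def AL_def)
    moreover have "xs = h1 M ys" using xy x True wa h(5) by (auto simp: h1_def)
    ultimately show ?thesis by blast
  next
    case False
    show ?thesis
    proof (cases "2 \<le> a")
      case True
      have wa: "w a f = a" using True by (simp add: w_def)
      have "ys \<in> B2set n M k" using h False True wa by (auto simp: B2set_def AL_def)
      moreover have "xs = h2 M ys" using xy x False wa h(5) by (auto simp: h2_def)
      ultimately show ?thesis by blast
    next
      case a2: False
      have wa: "w a f = 0" using a2 False by (simp add: w_def)
      have ysq: "ys \<in> QL n M k" using h False wa by (simp add: QL_def)
      have "a = 0 \<or> a = 1" using a2 by auto
      then show ?thesis using ysq xy x False by auto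
    qed
  qed
next
  fix xs assume xs: "xs \<in> ?R"
  consider (A0) ys where "ys \<in> QL n M k" "xs = (0,False) # ys"
    | (A1) ys where "ys \<in> QL n M k" "xs = (1,False) # ys"
    | (B1) ys where "ys \<in> B1set n M k" "xs = h1 M ys"
    | (B2) ys where "ys \<in> B2set n M k" "xs = h2 M ys"
    using xs by blast
  then show "xs \<in> ?L"
  proof cases
    case A0 then show ?thesis by (simp add: QL_def w_def)
  next
    case A1 then show ?thesis by (simp add: QL_def w_def)
  next
    case B1
    then have h: "length ys = n" "valid ys" "nT ys = k - 1" "WL ys \<le> M - 1" "1 \<le> M" "1 \<le> k"
      by (auto simp: B1set_def AL_def)
    have ge: "1 \<le> M - WL ys" using h by linarith
    have "w (M - WL ys) True = M - WL ys" using ge by (simp add: w_def)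
    then show ?thesis using B1 h by (simp add: QL_def h1_def)
  next
    case B2
    then have h: "length ys = n" "valid ys" "nT ys = k" "WL ys \<le> M - 2" "2 \<le> M"
      by (auto simp: B2set_def AL_def)
    have "w (M - WL ys) False = M - WL ys" using h by (simp add: w_def)
    then show ?thesis using B2 h by (simp add: QL_def h2_def)
  qed
qed

lemma card_QL_Suc:
  "card (QL (Suc n) M k) = 2 * card (QL n M k)
     + (if 1 \<le> M \<and> 1 \<le> k then card (AL n (M - 1) (k - 1)) else 0)
     + (if 2 \<le> M then card (AL n (M - 2) k) else 0)"
proof -
  let ?A0 = "Cons (0,False) ` QL n M k" and ?A1 = "Cons (1,False) ` QL n M k"
  let ?B1 = "h1 M ` B1set n M k" and ?B2 = "h2 M ` B2set n M k"
  have fB1: "finite (B1set n M k)" by (rule finite_subset[OF _ AL_finite]) (auto simp: B1set_def)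
  have fB2: "finite (B2set n M k)" by (rule finite_subset[OF _ AL_finite]) (auto simp: B2set_def)
  have ih1: "inj_on (h1 M) X" for X by (rule inj_onI) (simp add: h1_def)
  have ih2: "inj_on (h2 M) X" for X by (rule inj_onI) (simp add: h2_def)
  have c0: "card ?A0 = card (QL n M k)" by (rule card_image) simp
  have c1: "card ?A1 = card (QL n M k)" by (rule card_image) simp
  have cB1: "card ?B1 = (if 1 \<le> M \<and> 1 \<le> k then card (AL n (M - 1) (k - 1)) else 0)"
    using card_image[OF ih1, of "B1set n M k"] by (cases "1 \<le> M"; cases "1 \<le> k") (simp_all add: B1set_def)
  have cB2: "card ?B2 = (if 2 \<le> M then card (AL n (M - 2) k) else 0)"
    using card_image[OF ih2] by (simp add: B2set_def)
  have d01: "?A0 \<inter> ?A1 = {}" by auto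
  have dB1: "(?A0 \<union> ?A1) \<inter> ?B1 = {}" by (auto simp: h1_def)
  have dB2: "(?A0 \<union> ?A1 \<union> ?B1) \<inter> ?B2 = {}"
  proof -
    have "(M - WL ys) \<ge> 2" if "ys \<in> B2set n M k" for ys using that by (auto simp: B2set_def AL_def)
    then show ?thesis by (fastforce simp: h1_def h2_def)
  qed
  have f0: "finite ?A0" "finite ?A1" using QL_finite by auto
  have "card (QL (Suc n) M k) = card (?A0 \<union> ?A1 \<union> ?B1 \<union> ?B2)" by (simp only: QL_Suc_eq)
  also have "\<dots> = card (?A0 \<union> ?A1 \<union> ?B1) + card ?B2"
    by (rule card_Un_disjoint) (use f0 fB1 fB2 dB2 in auto)
  also have "card (?A0 \<union> ?A1 \<union> ?B1) = card (?A0 \<union> ?A1) + card ?B1"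
    by (rule card_Un_disjoint) (use f0 fB1 dB1 in auto)
  also have "card (?A0 \<union> ?A1) = card ?A0 + card ?A1"
    by (rule card_Un_disjoint) (use f0 d01 in auto)
  finally show ?thesis using c0 c1 cB1 cB2 by simp
qed

lemma card_AL_0: "card (AL n 0 k) = card (QL n 0 k)"
  by (simp add: AL_def QL_def)

lemma card_AL_Suc: "card (AL n (Suc N) k) = card (AL n N k) + card (QL n (Suc N) k)"
proof -
  have "AL n (Suc N) k = AL n N k \<union> QL n (Suc N) k" by (auto simp: AL_def QL_def)
  moreover have "card (AL n N k \<union> QL n (Suc N) k) = card (AL n N k) + card (QL n (Suc N) k)"
    by (rule card_Un_disjoint[OF AL_finite QL_finite]) (auto simp: AL_def QL_def)
  ultimately show ?thesis by simp
qed

lemma card_QL_0: "card (QL 0 M k) = (if M = 0 \<and> k = 0 then 1 else 0)"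
proof -
  have "QL 0 M k = (if M = 0 \<and> k = 0 then {[]} else {})" by (auto simp: QL_def)
  then show ?thesis by simp
qed

lemma card_AL_0n: "card (AL 0 N k) = (if k = 0 then 1 else 0)"
proof -
  have "AL 0 N k = (if k = 0 then {[]} else {})" by (auto simp: AL_def)
  then show ?thesis by simp
qed


definition Tm :: "nat \<Rightarrow> nat \<Rightarrow> nat \<Rightarrow> nat \<Rightarrow> nat" where
  "Tm n N k d = 2 ^ (n - d) * (n choose d) * (d choose k) * ((N + k - d) choose d)"
definition Phi :: "nat \<Rightarrow> nat \<Rightarrow> nat \<Rightarrow> nat" where "Phi n N k = (\<Sum>d\<le>n. Tm n N k d)"
definition Psi :: "nat \<Rightarrow> nat \<Rightarrow> nat \<Rightarrow> nat" where
  "Psi n N k = (\<Sum>e\<le>n. 2 ^ (n - e) * (n choose e) * (Suc e choose k) * ((N + k - Suc e) choose Suc e))"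

lemma Phi_Suc: "Phi (Suc n) N k = 2 * Phi n N k + Psi n N k"
proof -
  define G where "G d = (N + k - d) choose d" for d
  define U where "U e = 2 ^ (n - e) * (n choose Suc e) * (Suc e choose k) * G (Suc e)" for e
  define V where "V e = 2 ^ (n - e) * (n choose e) * (Suc e choose k) * G (Suc e)" for e
  have T0: "Tm (Suc n) N k 0 = 2 * Tm n N k 0" by (simp add: Tm_def)
  have TS: "Tm (Suc n) N k (Suc e) = V e + U e" for e
    by (simp add: Tm_def U_def V_def G_def algebra_simps)
  have "Phi (Suc n) N k = Tm (Suc n) N k 0 + (\<Sum>e\<le>n. Tm (Suc n) N k (Suc e))"
    unfolding Phi_def by (rule sum.atMost_Suc_shift)
  also have "\<dots> = Tm (Suc n) N k 0 + (\<Sum>e\<le>n. U e) + (\<Sum>e\<le>n. V e)"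
    by (simp add: TS sum.distrib)
  also have "(\<Sum>e\<le>n. U e) = (\<Sum>e<n. U e)"
  proof -
    have "(\<Sum>e\<le>n. U e) = (\<Sum>e<Suc n. U e)" by (simp add: lessThan_Suc_atMost)
    also have "\<dots> = (\<Sum>e<n. U e) + U n" by simp
    also have "U n = 0" by (simp add: U_def)
    finally show ?thesis by simp
  qed
  also have "(\<Sum>e<n. U e) = (\<Sum>e<n. 2 * Tm n N k (Suc e))"
  proof (intro sum.cong refl)
    fix e assume "e \<in> {..<n}"
    then have "n - e = Suc (n - Suc e)" by simp
    then have "(2::nat) ^ (n - e) = 2 * 2 ^ (n - Suc e)" by simp
    then show "U e = 2 * Tm n N k (Suc e)" by (simp add: U_def Tm_def G_def)
  qed
  also have "(\<Sum>e\<le>n. V e) = Psi n N k" by (simp add: V_def Psi_def G_def)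
  also have "Tm (Suc n) N k 0 + (\<Sum>e<n. 2 * Tm n N k (Suc e)) = 2 * Phi n N k"
    unfolding Phi_def T0 by (simp add: sum.atMost_shift sum_distrib_left)
  finally show ?thesis by simp
qed

lemma key_term:
  "(Suc e choose k) * ((Suc N + k - Suc e) choose Suc e) =
   (Suc e choose k) * ((N + k - Suc e) choose Suc e)
   + (if 1 \<le> k then (e choose (k - 1)) * ((N + (k - 1) - e) choose e) else 0)
   + (if 1 \<le> N then (e choose k) * ((N - 1 + k - e) choose e) else 0)"
proof (cases "e < N + k")
  case False
  have z1: "Suc N + k - Suc e = 0" "N + k - Suc e = 0" using False by auto
  have z2: "(if 1 \<le> k then (e choose (k - 1)) * ((N + (k - 1) - e) choose e) else 0) = 0"
  proof (cases "1 \<le> k")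
    case True
    then have "N + (k - 1) - e = 0" "e \<ge> 1" using False by auto
    then show ?thesis by simp
  qed simp
  have z3: "(if 1 \<le> N then (e choose k) * ((N - 1 + k - e) choose e) else 0) = 0"
  proof (cases "1 \<le> N")
    case True
    then have "N - 1 + k - e = 0" "e \<ge> 1" using False by auto
    then show ?thesis by simp
  qed simp
  show ?thesis unfolding z2 z3 z1 by simp
next
  case True
  define p where "p = N + k - Suc e"
  have p1: "Suc N + k - Suc e = Suc p" using True by (simp add: p_def)
  have pas: "(Suc p choose Suc e) = (p choose e) + (p choose Suc e)" by simp
  have main: "(Suc e choose k) * (p choose e) =
      (if 1 \<le> k then (e choose (k - 1)) * ((N + (k - 1) - e) choose e) else 0)
      + (if 1 \<le> N then (e choose k) * ((N - 1 + k - e) choose e) else 0)"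
  proof (cases k)
    case 0
    then have N1: "1 \<le> N" "N - 1 - e = p" using True by (auto simp: p_def)
    then show ?thesis using 0 by simp
  next
    case (Suc k')
    have q1: "N + (k - 1) - e = p" using True Suc by (simp add: p_def)
    have e2: "(Suc e choose k) = (e choose k') + (e choose k)" using Suc by simp
    show ?thesis
    proof (cases "1 \<le> N")
      case True
      have "N - 1 + k - e = p" using True \<open>e < N + k\<close> Suc by (simp add: p_def)
      then show ?thesis using q1 e2 Suc True by (simp add: algebra_simps)
    next
      case False
      then have "N = 0" by simp
      then have "e < k" using \<open>e < N + k\<close> by simp
      then have "(e choose k) = 0" by simp
      then show ?thesis using q1 e2 Suc False by simp
    qed
  qed
  show ?thesis unfolding p1 pas using main by (simp add: p_def algebra_simps)
qed

lemma Psi_rec: "Psi n (Suc N) k = Psi n N k + (if 1 \<le> k then Phi n N (k - 1) else 0)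
    + (if 1 \<le> N then Phi n (N - 1) k else 0)"
proof -
  define c where "c e = 2 ^ (n - e) * (n choose e)" for e
  have "Psi n (Suc N) k = (\<Sum>e\<le>n. c e * ((Suc e choose k) * ((Suc N + k - Suc e) choose Suc e)))"
    unfolding Psi_def c_def by (simp add: algebra_simps)
  also have "\<dots> = (\<Sum>e\<le>n. c e * ((Suc e choose k) * ((N + k - Suc e) choose Suc e))
      + (if 1 \<le> k then c e * ((e choose (k - 1)) * ((N + (k - 1) - e) choose e)) else 0)
      + (if 1 \<le> N then c e * ((e choose k) * ((N - 1 + k - e) choose e)) else 0))"
    by (intro sum.cong refl) (subst key_term, simp only: distrib_left if_distrib[of "\<lambda>x. c _ * x"] mult_0_right)
  also have "\<dots> = (\<Sum>e\<le>n. c e * ((Suc e choose k) * ((N + k - Suc e) choose Suc e)))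
      + (\<Sum>e\<le>n. (if 1 \<le> k then c e * ((e choose (k - 1)) * ((N + (k - 1) - e) choose e)) else 0))
      + (\<Sum>e\<le>n. (if 1 \<le> N then c e * ((e choose k) * ((N - 1 + k - e) choose e)) else 0))"
    by (simp only: sum.distrib)
  also have "(\<Sum>e\<le>n. c e * ((Suc e choose k) * ((N + k - Suc e) choose Suc e))) = Psi n N k"
    unfolding Psi_def c_def by (intro sum.cong refl) (simp only: mult.assoc)
  also have "(\<Sum>e\<le>n. (if 1 \<le> k then c e * ((e choose (k - 1)) * ((N + (k - 1) - e) choose e)) else 0))
      = (if 1 \<le> k then Phi n N (k - 1) else 0)"
  proof (cases "1 \<le> k")
    case True
    have "(\<Sum>e\<le>n. c e * ((e choose (k - 1)) * ((N + (k - 1) - e) choose e))) = Phi n N (k - 1)"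
      unfolding Phi_def Tm_def c_def by (intro sum.cong refl) (simp only: mult.assoc)
    then show ?thesis using True by simp
  qed simp
  also have "(\<Sum>e\<le>n. (if 1 \<le> N then c e * ((e choose k) * ((N - 1 + k - e) choose e)) else 0))
      = (if 1 \<le> N then Phi n (N - 1) k else 0)"
  proof (cases "1 \<le> N")
    case True
    have "(\<Sum>e\<le>n. c e * ((e choose k) * ((N - 1 + k - e) choose e))) = Phi n (N - 1) k"
      unfolding Phi_def Tm_def c_def by (intro sum.cong refl) (simp only: mult.assoc)
    then show ?thesis using True by simp
  qed simp
  finally show ?thesis .
qed

lemma Psi_0: "Psi n 0 k = 0"
  unfolding Psi_def
proof (intro sum.neutral ballI)
  fix e assume "e \<in> {..n}"
  show "2 ^ (n - e) * (n choose e) * (Suc e choose k) * ((0 + k - Suc e) choose Suc e) = 0"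
  proof (cases "k \<le> Suc e")
    case True then have "0 + k - Suc e = 0" by simp
    then show ?thesis by simp
  next
    case False then show ?thesis by simp
  qed
qed

lemma Phi_0n: "Phi 0 N k = (if k = 0 then 1 else 0)"
  by (simp add: Phi_def Tm_def)

lemma Aterm_Phi: "Aterm n r k 0 = Phi n (r + k) k"
proof -
  have "Aterm n r k 0 = (\<Sum>d\<in>{k..min n (r div 2 + k)}. Tm n (r + k) k d)"
    unfolding Aterm_def Tm_def
  proof (intro sum.cong)
    fix x
    have e1: "r + 2 * k - 0 - x = r + k + k - x" by simp
    have e2: "k - 0 = k" "(r + 0) div 2 + k - 0 = r div 2 + k" by simp_all
    show "2 ^ (n - x) * (n choose x) * (r + 2 * k - 0 - x choose x) * (x choose (k - 0)) =
         2 ^ (n - x) * (n choose x) * (x choose k) * (r + k + k - x choose x)"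
      by (simp only: e1 e2) (simp add: ac_simps)
  qed simp
  also have "\<dots> = (\<Sum>d\<le>n. Tm n (r + k) k d)"
  proof (rule sum.mono_neutral_left)
    show "\<forall>d\<in>{..n} - {k..min n (r div 2 + k)}. Tm n (r + k) k d = 0"
    proof
      fix d assume d: "d \<in> {..n} - {k..min n (r div 2 + k)}"
      show "Tm n (r + k) k d = 0"
      proof (cases "d < k")
        case True then show ?thesis by (simp add: Tm_def)
      next
        case False
        then have "r div 2 + k < d" using d by auto
        then have "r + k + k - d < d" by linarith
        then show ?thesis by (simp add: Tm_def)
      qed
    qed
  qed auto
  finally show ?thesis by (simp add: Phi_def)
qed


lemma AL_Phi: "card (AL n N k) = Phi n N k"
proof (induction n arbitrary: N k)
  case 0
  then show ?case by (simp add: card_AL_0n Phi_0n)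
next
  case (Suc n)
  note IHn = Suc.IH
  have Q0: "card (QL n 0 k) = Phi n 0 k" for k using Suc.IH[of 0 k] card_AL_0[of n k] by simp
  have QS: "Phi n (Suc M) k = Phi n M k + card (QL n (Suc M) k)" for M k
    using Suc.IH[of "Suc M" k] Suc.IH[of M k] card_AL_Suc[of n M k] by simp
  show ?case
  proof (induction N arbitrary: k)
    case 0
    have "card (AL (Suc n) 0 k) = card (QL (Suc n) 0 k)" by (rule card_AL_0)
    also have "\<dots> = 2 * card (QL n 0 k)" by (simp add: card_QL_Suc)
    also have "\<dots> = Phi (Suc n) 0 k" using Q0[of k] by (simp add: Phi_Suc Psi_0)
    finally show ?case .
  next
    case (Suc N')
    have "card (AL (Suc n) (Suc N') k) = card (AL (Suc n) N' k) + card (QL (Suc n) (Suc N') k)"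
      by (rule card_AL_Suc)
    also have "\<dots> = Phi (Suc n) N' k + (2 * card (QL n (Suc N') k)
       + (if 1 \<le> k then Phi n N' (k - 1) else 0) + (if 1 \<le> N' then Phi n (N' - 1) k else 0))"
      using Suc.IH[of k] by (simp add: card_QL_Suc IHn Suc_le_eq)
    also have "\<dots> = Phi (Suc n) (Suc N') k"
      using QS[of N' k] by (simp add: Phi_Suc Psi_rec)
    finally show ?case .
  qed
qed

lemma card_Aset_Phi: "card (Aset n N k) = Phi n N k"
  by (simp add: card_Aset_AL AL_Phi)


lemma card_rec:
  assumes "1 \<le> r"
  shows "int (card (Iset n r k)) + (case k of 0 \<Rightarrow> 0 | Suc k' \<Rightarrow> int (card (Iset n (Suc r) k')))
       = int (Aterm n r k 0) - int (Bterm n r k 0)"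
proof -
  have PA: "card (Pset n (r + k) k) \<le> card (Aset n (r + k) k)"
    by (rule card_mono[OF Aset_finite P_sub_A])
  have "card (Eset n r k) = card (Aset n (r + k) k) - card (Pset n (r + k) k)" by (rule card_E_AP)
  then have "int (card (Eset n r k)) = int (Aterm n r k 0) - int (Bterm n r k 0)"
    using PA by (simp add: card_Aset_Phi Aterm_Phi card_P of_nat_diff)
  moreover have "int (card (Eset n r k)) = int (card (Iset n r k)) + (case k of 0 \<Rightarrow> 0 | Suc k' \<Rightarrow> int (card (Iset n (Suc r) k')))"
    using card_E[OF assms, of n k] by (cases k) simp_all
  ultimately show ?thesis by simp
qed

lemma Aterm_shift: assumes "i \<le> k" shows "Aterm n r k i = Aterm n (r + i) (k - i) 0"
proof -
  have e1: "\<And>d. r + 2 * k - i - d = r + i + 2 * (k - i) - 0 - d" using assms by simp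
  have e2: "(r + i) div 2 + k - i = (r + i + 0) div 2 + (k - i) - 0" using assms by simp
  show ?thesis unfolding Aterm_def e1 e2 by simp
qed

lemma Bterm_shift: "Bterm n r k i = Bterm n (r + i) (k - i) 0"
  by (simp add: Bterm_def)

lemma main_count:
  "1 \<le> r \<Longrightarrow> int (card (Iset n r k)) = (\<Sum>i = 0..k. (-1) ^ i * (int (Aterm n r k i) - int (Bterm n r k i)))"
proof (induction k arbitrary: r)
  case 0
  then show ?case using card_rec[OF 0, of n 0] by simp
next
  case (Suc k)
  have r1: "1 \<le> Suc r" by simp
  have rec: "int (card (Iset n r (Suc k))) = int (Aterm n r (Suc k) 0) - int (Bterm n r (Suc k) 0) - int (card (Iset n (Suc r) k))"
    using card_rec[OF Suc.prems, of n "Suc k"] by simp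
  have sh: "(\<Sum>i = 0..k. (-1) ^ Suc i * (int (Aterm n r (Suc k) (Suc i)) - int (Bterm n r (Suc k) (Suc i))))
      = - (\<Sum>i = 0..k. (-1) ^ i * (int (Aterm n (Suc r) k i) - int (Bterm n (Suc r) k i)))"
  proof -
    have "(\<Sum>i = 0..k. (-1) ^ Suc i * (int (Aterm n r (Suc k) (Suc i)) - int (Bterm n r (Suc k) (Suc i))))
        = (\<Sum>i = 0..k. - ((-1) ^ i * (int (Aterm n (Suc r) k i) - int (Bterm n (Suc r) k i))))"
    proof (intro sum.cong refl)
      fix i assume "i \<in> {0..k}"
      then have ik: "i \<le> k" by simp
      have a: "Aterm n r (Suc k) (Suc i) = Aterm n (Suc r) k i"
        using Aterm_shift[of "Suc i" "Suc k" n r] Aterm_shift[OF ik, of n "Suc r"] ik by simp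
      have b: "Bterm n r (Suc k) (Suc i) = Bterm n (Suc r) k i"
        using Bterm_shift[of n r "Suc k" "Suc i"] Bterm_shift[of n "Suc r" k i] by simp
      show "(-1) ^ Suc i * (int (Aterm n r (Suc k) (Suc i)) - int (Bterm n r (Suc k) (Suc i))) =
            - ((-1) ^ i * (int (Aterm n (Suc r) k i) - int (Bterm n (Suc r) k i)))"
        unfolding a b by simp
    qed
    then show ?thesis by (simp only: sum_negf)
  qed
  have "(\<Sum>i = 0..Suc k. (-1) ^ i * (int (Aterm n r (Suc k) i) - int (Bterm n r (Suc k) i)))
     = (-1) ^ 0 * (int (Aterm n r (Suc k) 0) - int (Bterm n r (Suc k) 0))
       + (\<Sum>i = 0..k. (-1) ^ Suc i * (int (Aterm n r (Suc k) (Suc i)) - int (Bterm n r (Suc k) (Suc i))))"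
    by (simp only: sum.atLeast0_atMost_Suc_shift comp_def)
  also have "\<dots> = int (Aterm n r (Suc k) 0) - int (Bterm n r (Suc k) 0) - int (card (Iset n (Suc r) k))"
    unfolding sh Suc.IH[OF r1] by simp
  finally show ?case using rec by simp
qed

theorem mainTheorem6:
  fixes n r k :: nat
  assumes "n \<ge> 1" and "r \<ge> 1" and "k \<le> n"
  shows "int (vector_space.dim fscale (Jspace n r k)) =
    (\<Sum>i = 0..k. (-1) ^ i * (int (Aterm n r k i) - int (Bterm n r k i)))"
  using dimJ[OF assms(2), of n k] main_count[OF assms(2), of n k] by simp


end
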